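(* Let $(m,n)$ be bi-dimensions with $m>1$, $m\le\binom n2$, and $(m,n)\notin\{(2,4),(3,4)\}$. Then a generic real algebra $\mathfrak n\in N(m,n)$ is not of pseudo $H$-type (in particular, for $m>2$ generic rigid algebras in $N(m,n)$ are not of pseudo $H$-type).
   Context: For a real vector space $\mathfrak n_{-1}$ of dimension $n$ and $0\le m\le\binom n2$, $N(m,n)$ denotes the space of graded 2-step nilpotent Lie algebra structures $\mathfrak n=\mathfrak n_{-2}\oplus\mathfrak n_{-1}$ with $\dim\mathfrak n_{-2}=m$, bracket $\Lambda^2\mathfrak n_{-1}\to\mathfrak n_{-2}$ surjective and $\mathfrak n_{-2}$ central; it is identified with the Grassmannian $\operatorname{Gr}_d(\Lambda^2\mathfrak n_{-1})$, $d=\binom n2-m$, via the kernel $Z$ of the bracket. "Generic" means for $Z$ in a nonempty Zariski open subset. An algebra $\mathfrak n$ is of pseudo $H$-type if there is a non-degenerate symmetric bilinear form $\langle\cdot,\cdot\rangle$ on $\mathfrak n$, non-degenerate on $\mathfrak n_{-2}$, with $\mathfrak n_{-2}\perp\mathfrak n_{-1}$, such that the $J$-map defined by $\langle J_zx,y\rangle=\langle z,[x,y]\rangle$ ($x,y\in\mathfrak n_{-1}$, $z\in\mathfrak n_{-2}$) satisfies $J_zJ_w+J_wJ_z=-2\langle z,w\rangle\mathrm{Id}_{\mathfrak n_{-1}}$ for all $z,w\in\mathfrak n_{-2}$. An algebra is rigid if its Tanaka prolongation (the maximal graded Lie algebra $\bigoplus_{i\ge-2}\hat{\mathfrak n}_i$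 with negative part $\mathfrak n$ such that for $k\ge0$ any $X\in\hat{\mathfrak n}_k$ with $[X,\mathfrak n_{-1}]=0$ is zero) is finite dimensional. *)

theory Defs
  imports Complex_Main
begin

text \<open>
  We take the basis f_0,...,f_(m-1) of n_(-2) and e_0,...,e_(n-1)
  of n_(-1), and model an element of n = n_(-2) + n_(-1) as a coordinate
  function u :: nat => real supported on indices < m+n: coordinate k < m is the
  f_k-coordinate, coordinate m+i (i < n) is the e_i-coordinate.
\<close>

definition vecs :: "nat \<Rightarrow> (nat \<Rightarrow> real) set" where
  "vecs N = {u. \<forall>i\<ge>N. u i = 0}"

definition part2 :: "nat \<Rightarrow> nat \<Rightarrow> (nat \<Rightarrow> real) set" where
  "part2 m n = vecs m"

definition part1 :: "nat \<Rightarrow> nat \<Rightarrow> (nat \<Rightarrow> real) set" where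
  "part1 m n = {u \<in> vecs (m + n). \<forall>i<m. u i = 0}"

definition bil :: "(nat \<Rightarrow> nat \<Rightarrow> real) \<Rightarrow> nat \<Rightarrow> (nat \<Rightarrow> real) \<Rightarrow> (nat \<Rightarrow> real) \<Rightarrow> real" where
  "bil g N u v = (\<Sum>i<N. \<Sum>j<N. u i * g i j * v j)"

text \<open>
  Structure constants: a (i,j,k), for i < j < n and k < m, is the f_k-coefficient
  of [e_i, e_j]; i.e. a records the linear map Lambda^2 n_(-1) -> n_(-2) in the
  basis e_i /\ e_j (i<j).  Other entries of a are irrelevant.
\<close>
definition br :: "nat \<Rightarrow> nat \<Rightarrow> (nat \<times> nat \<times> nat \<Rightarrow> real) \<Rightarrow>
    (nat \<Rightarrow> real) \<Rightarrow> (nat \<Rightarrow> real) \<Rightarrow> (nat \<Rightarrow> real)" where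
  "br m n a u v = (\<lambda>k. if k < m then
      (\<Sum>j<n. \<Sum>i<j. a (i, j, k) * (u (m + i) * v (m + j) - u (m + j) * v (m + i)))
    else 0)"

definition bracket_surj :: "nat \<Rightarrow> nat \<Rightarrow> (nat \<times> nat \<times> nat \<Rightarrow> real) \<Rightarrow> bool" where
  "bracket_surj m n a \<longleftrightarrow>
     (\<forall>w \<in> vecs m. \<exists>t :: nat \<Rightarrow> nat \<Rightarrow> real.
        \<forall>k<m. w k = (\<Sum>j<n. \<Sum>i<j. t i j * a (i, j, k)))"

definition pseudo_H_type :: "nat \<Rightarrow> nat \<Rightarrow> (nat \<times> nat \<times> nat \<Rightarrow> real) \<Rightarrow> bool" where
  "pseudo_H_type m n a \<longleftrightarrow>
     (\<exists>g :: nat \<Rightarrow> nat \<Rightarrow> real.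
        \<comment> \<open>symmetric\<close>
        (\<forall>i<m+n. \<forall>j<m+n. g i j = g j i) \<and>
        \<comment> \<open>non-degenerate on n\<close>
        (\<forall>u \<in> vecs (m + n). (\<forall>v \<in> vecs (m + n). bil g (m + n) u v = 0) \<longrightarrow> u = (\<lambda>_. 0)) \<and>
        \<comment> \<open>non-degenerate on n_(-2)\<close>
        (\<forall>u \<in> part2 m n. (\<forall>v \<in> part2 m n. bil g (m + n) u v = 0) \<longrightarrow> u = (\<lambda>_. 0)) \<and>
        \<comment> \<open>n_(-2) orthogonal to n_(-1)\<close>
        (\<forall>u \<in> part2 m n. \<forall>v \<in> part1 m n. bil g (m + n) u v = 0) \<and>
        \<comment> \<open>the J-map and the Clifford relation\<close>
        (\<exists>J :: (nat \<Rightarrow> real) \<Rightarrow> (nat \<Rightarrow> real) \<Rightarrow> (nat \<Rightarrow> real).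
           (\<forall>z \<in> part2 m n. \<forall>x \<in> part1 m n. J z x \<in> part1 m n) \<and>
           (\<forall>z \<in> part2 m n. \<forall>x \<in> part1 m n. \<forall>y \<in> part1 m n.
               bil g (m + n) (J z x) y = bil g (m + n) z (br m n a x y)) \<and>
           (\<forall>z \<in> part2 m n. \<forall>w \<in> part2 m n. \<forall>x \<in> part1 m n.
               (\<lambda>i. J z (J w x) i + J w (J z x) i) = (\<lambda>i. - 2 * bil g (m + n) z w * x i))))"

inductive poly_fun :: "'v set \<Rightarrow> (('v \<Rightarrow> real) \<Rightarrow> real) \<Rightarrow> bool" for S where
  pf_const: "poly_fun S (\<lambda>_. c)"
| pf_var: "v \<in> S \<Longrightarrow> poly_fun S (\<lambda>a. a v)"
| pf_add: "poly_fun S p \<Longrightarrow> poly_fun S q \<Longrightarrow> poly_fun S (\<lambda>a. p a + q a)"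
| pf_mult: "poly_fun S p \<Longrightarrow> poly_fun S q \<Longrightarrow> poly_fun S (\<lambda>a. p a * q a)"

definition coords :: "nat \<Rightarrow> nat \<Rightarrow> (nat \<times> nat \<times> nat) set" where
  "coords m n = {(i, j, k). i < j \<and> j < n \<and> k < m}"

text \<open>
  A property holds for a generic element of N(m,n): it holds on a nonempty
  Zariski open subset, i.e. there is a polynomial P in the structure constants,
  not identically zero, such that every algebra of N(m,n) (surjective bracket)
  with P \<noteq> 0 has the property.
\<close>
definition generic :: "nat \<Rightarrow> nat \<Rightarrow> ((nat \<times> nat \<times> nat \<Rightarrow> real) \<Rightarrow> bool) \<Rightarrow> bool" where
  "generic m n Prop \<longleftrightarrow>
     (\<exists>P. poly_fun (coords m n) P \<and> (\<exists>a. P a \<noteq> 0) \<and>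
          (\<forall>a. bracket_surj m n a \<and> P a \<noteq> 0 \<longrightarrow> Prop a))"

end

theory Submission
  imports Defs "Jordan_Normal_Form.Determinant"
begin


lemma sum_split_add: "(\<Sum>i<m+n. f i) = (\<Sum>i<m. f i) + (\<Sum>i<n. f (m+i)::'a::comm_monoid_add)" for m n :: nat
  by (induction n) (simp_all add: add.assoc)

lemma pf_sum: assumes "finite S" "\<And>x. x\<in>S \<Longrightarrow> poly_fun V (f x)"
  shows "poly_fun V (\<lambda>a. \<Sum>x\<in>S. f x a)"
  using assms by (induction S rule: finite_induct) (auto intro: poly_fun.intros)

lemma pf_prod: assumes "finite S" "\<And>x. x\<in>S \<Longrightarrow> poly_fun V (f x)"
  shows "poly_fun V (\<lambda>a. \<Prod>x\<in>S. f x a)"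
  using assms by (induction S rule: finite_induct) (auto intro: poly_fun.intros)

lemma pf_cmult: "poly_fun V p \<Longrightarrow> poly_fun V (\<lambda>a. c * p a)"
  using pf_mult[OF pf_const] by blast

lemma pf_neg: "poly_fun V p \<Longrightarrow> poly_fun V (\<lambda>a. - p a)"
  using pf_cmult[of V p "-1"] by simp

lemma pf_diff: "poly_fun V p \<Longrightarrow> poly_fun V q \<Longrightarrow> poly_fun V (\<lambda>a. p a - q a)"
  using pf_add[OF _ pf_neg] by (simp add: pf_add pf_neg)

definition pmat :: "'v set \<Rightarrow> nat \<Rightarrow> (('v \<Rightarrow> real) \<Rightarrow> real mat) \<Rightarrow> bool" where
  "pmat V n M \<longleftrightarrow> (\<forall>a. M a \<in> carrier_mat n n) \<and> (\<forall>i<n. \<forall>j<n. poly_fun V (\<lambda>a. M a $$ (i,j)))"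

lemma pmat_mult: assumes "pmat V n M" "pmat V n M'"
  shows "pmat V n (\<lambda>a. M a * M' a)"
proof -
  have c: "\<And>a. M a \<in> carrier_mat n n" "\<And>a. M' a \<in> carrier_mat n n" using assms unfolding pmat_def by auto
  have "poly_fun V (\<lambda>a. (M a * M' a) $$ (i,j))" if "i<n" "j<n" for i j
  proof -
    have e: "(M a * M' a) $$ (i,j) = (\<Sum>k\<in>{0..<n}. M a $$ (i,k) * M' a $$ (k,j))" for a
      using c[of a] that by (auto simp: scalar_prod_def)
    show ?thesis unfolding e
      by (rule pf_sum) (use assms that in \<open>auto simp: pmat_def intro!: pf_mult\<close>)
  qed
  then show ?thesis using c unfolding pmat_def by (metis mult_carrier_mat)
qed

lemma pmat_det: assumes "pmat V n M" shows "poly_fun V (\<lambda>a. det (M a))"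
proof -
  have c: "\<And>a. M a \<in> carrier_mat n n" using assms unfolding pmat_def by auto
  have e: "det (M a) = (\<Sum> p \<in> {p. p permutes {0 ..< n}}. signof p * (\<Prod> i = 0 ..< n. M a $$ (i, p i)))" for a
    using det_def'[OF c] .
  show ?thesis unfolding e
  proof (rule pf_sum)
    fix p assume p: "p \<in> {p. p permutes {0 ..< n}}"
    have "poly_fun V (\<lambda>a. \<Prod> i = 0 ..< n. M a $$ (i, p i))"
    proof (rule pf_prod)
      fix i assume i: "i \<in> {0..<n}"
      have "p i < n" using p i permutes_in_image by fastforce
      then show "poly_fun V (\<lambda>a. M a $$ (i, p i))" using assms i unfolding pmat_def by auto
    qed auto
    then show "poly_fun V (\<lambda>a. signof p * (\<Prod> i = 0 ..< n. M a $$ (i, p i)))" by (rule pf_cmult)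
  qed (simp add: finite_permutations)
qed

lemma pmat_delete: assumes "pmat V n M" "i < n" "j < n"
  shows "pmat V (n - 1) (\<lambda>a. mat_delete (M a) i j)"
proof -
  have c: "\<And>a. M a \<in> carrier_mat n n" using assms unfolding pmat_def by auto
  show ?thesis unfolding pmat_def
  proof (intro conjI allI impI)
    fix a show "mat_delete (M a) i j \<in> carrier_mat (n - 1) (n - 1)" using c[of a] by (auto simp: mat_delete_def)
  next
    fix i' j' assume ij: "i' < n - 1" "j' < n - 1"
    have e: "mat_delete (M a) i j $$ (i', j') = M a $$ (if i' < i then i' else Suc i', if j' < j then j' else Suc j')" for a
      using c[of a] ij by (auto simp: mat_delete_def)
    show "poly_fun V (\<lambda>a. mat_delete (M a) i j $$ (i', j'))" unfolding e
      using assms ij unfolding pmat_def by auto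
  qed
qed

lemma pmat_adj: assumes "pmat V n M" shows "pmat V n (\<lambda>a. adj_mat (M a))"
proof -
  have c: "\<And>a. M a \<in> carrier_mat n n" using assms unfolding pmat_def by auto
  show ?thesis unfolding pmat_def
  proof (intro conjI allI impI)
    fix a show "adj_mat (M a) \<in> carrier_mat n n" using adj_mat(1)[OF c] .
  next
    fix i j assume ij: "i < n" "j < n"
    have e: "adj_mat (M a) $$ (i,j) = (-1)^(j+i) * det (mat_delete (M a) j i)" for a
      using c[of a] ij by (auto simp: adj_mat_def cofactor_def)
    show "poly_fun V (\<lambda>a. adj_mat (M a) $$ (i, j))" unfolding e
      by (rule pf_cmult, rule pmat_det, rule pmat_delete[OF assms]) (use ij in auto)
  qed
qed



definition E :: "nat \<Rightarrow> nat \<Rightarrow> nat \<Rightarrow> real" where "E m i = (\<lambda>l. if l = m + i then 1 else 0)"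
definition F :: "nat \<Rightarrow> nat \<Rightarrow> real" where "F k = (\<lambda>l. if l = k then 1 else 0)"

lemma E_part1: "i < n \<Longrightarrow> E m i \<in> part1 m n"
  by (auto simp: E_def part1_def vecs_def)
lemma F_part2: "k < m \<Longrightarrow> F k \<in> part2 m n"
  by (auto simp: F_def part2_def vecs_def)
lemma E_at: "E m i (m + l) = (if l = i then 1 else 0)"
  by (auto simp: E_def)

lemma bil_expand: "bil g N u v = (\<Sum>i<N. u i * (\<Sum>j<N. g i j * v j))"
  unfolding bil_def by (simp add: sum_distrib_left mult.assoc)

lemma bil_sym: assumes "\<forall>i<N. \<forall>j<N. g i j = g j i" shows "bil g N u v = bil g N v u"
  unfolding bil_def
  by (subst sum.swap) (rule sum.cong[OF refl], rule sum.cong[OF refl], use assms in auto)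

lemma bil_add_left: "bil g N (\<lambda>i. u i + v i) w = bil g N u w + bil g N v w"
  unfolding bil_def by (simp add: algebra_simps sum.distrib)
lemma bil_smult_left: "bil g N (\<lambda>i. c * u i) w = c * bil g N u w"
  unfolding bil_def by (simp add: algebra_simps sum_distrib_left)
lemma bil_add_right: "bil g N w (\<lambda>i. u i + v i) = bil g N w u + bil g N w v"
  unfolding bil_def by (simp add: algebra_simps sum.distrib)
lemma bil_smult_right: "bil g N w (\<lambda>i. c * u i) = c * bil g N w u"
  unfolding bil_def by (simp add: algebra_simps sum_distrib_left)
lemma bil_neg_right: "bil g N w (\<lambda>i. - u i) = - bil g N w u"
  using bil_smult_right[of g N w "-1" u] by simp
lemma bil_sum_left: "bil g N (\<lambda>i. \<Sum>c\<in>S. f c i) w = (\<Sum>c\<in>S. bil g N (f c) w)"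
proof -
  have "bil g N (\<lambda>i. \<Sum>c\<in>S. f c i) w = (\<Sum>i<N. \<Sum>j<N. \<Sum>c\<in>S. f c i * g i j * w j)"
    unfolding bil_def by (simp add: sum_distrib_right)
  also have "\<dots> = (\<Sum>i<N. \<Sum>c\<in>S. \<Sum>j<N. f c i * g i j * w j)"
    by (rule sum.cong[OF refl], rule sum.swap)
  also have "\<dots> = (\<Sum>c\<in>S. \<Sum>i<N. \<Sum>j<N. f c i * g i j * w j)"
    by (rule sum.swap)
  finally show ?thesis unfolding bil_def .
qed

lemma sum_delta_mult: assumes "finite A" shows "(\<Sum>i\<in>A. (if i = k then 1 else 0) * f i) = (if k \<in> A then f k else (0::real))"
proof -
  have "(\<Sum>i\<in>A. (if i = k then 1 else 0) * f i) = (\<Sum>i\<in>A. if i = k then f i else 0)"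
    by (rule sum.cong) auto
  then show ?thesis using assms by (simp add: sum.delta')
qed
lemma sum_delta_mult': assumes "finite A" shows "(\<Sum>i\<in>A. f i * (if i = k then 1 else 0)) = (if k \<in> A then f k else (0::real))"
  using sum_delta_mult[OF assms, where k=k and f=f] by (simp add: mult.commute)

lemma part1_low: "u \<in> part1 m n \<Longrightarrow> i < m \<Longrightarrow> u i = 0"
  by (auto simp: part1_def)
lemma part1_high: "u \<in> part1 m n \<Longrightarrow> i \<ge> m + n \<Longrightarrow> u i = 0"
  by (auto simp: part1_def vecs_def)
lemma part2_high: "u \<in> part2 m n \<Longrightarrow> i \<ge> m \<Longrightarrow> u i = 0"
  by (auto simp: part2_def vecs_def)

lemma sum_part1: assumes "u \<in> part1 m n"
  shows "(\<Sum>i<m+n. u i * f i) = (\<Sum>i<n. u (m+i) * f (m+i))"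
  using assms by (simp add: sum_split_add part1_low)

lemma sum_part2: assumes "u \<in> part2 m n"
  shows "(\<Sum>i<m+n. u i * f i) = (\<Sum>i<m. u i * f i)"
  using assms by (simp add: sum_split_add part2_high)

lemma bil_E_right: assumes "u \<in> part1 m n" "j < n"
  shows "bil g (m+n) u (E m j) = (\<Sum>l<n. u (m+l) * g (m+l) (m+j))"
proof -
  have "(\<Sum>j'<m+n. g i j' * E m j j') = g i (m+j)" for i
    using assms(2) by (simp add: E_def if_distrib cong: if_cong)
  then show ?thesis unfolding bil_expand using sum_part1[OF assms(1)] by simp
qed

lemma bil_F_right: assumes "k < m + n"
  shows "bil g (m+n) u (F k) = (\<Sum>i<m+n. u i * g i k)"
  unfolding bil_expand using assms by (simp add: F_def sum_delta_mult')

lemma bil_F_left: assumes "k < m + n"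
  shows "bil g (m+n) (F k) u = (\<Sum>j<m+n. g k j * u j)"
  unfolding bil_expand using assms by (simp add: F_def sum_delta_mult)

definition Am :: "nat \<Rightarrow> (nat \<times> nat \<times> nat \<Rightarrow> real) \<Rightarrow> nat \<Rightarrow> real mat" where
  "Am n a k = mat n n (\<lambda>(i,j). if i < j then a (i,j,k) else if j < i then - a (j,i,k) else 0)"

lemma Am_carrier: "Am n a k \<in> carrier_mat n n" by (simp add: Am_def)
lemma Am_entry: "i < n \<Longrightarrow> j < n \<Longrightarrow> Am n a k $$ (i,j) = (if i < j then a (i,j,k) else if j < i then - a (j,i,k) else 0)"
  by (simp add: Am_def)

lemma br_vecs: "br m n a x y \<in> vecs m"
  by (simp add: br_def vecs_def)

lemma br_antisym: "br m n a x y = (\<lambda>k. - br m n a y x k)"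
proof (rule ext)
  fix k
  have "(\<Sum>j<n. \<Sum>i<j. a (i, j, k) * (x (m + i) * y (m + j) - x (m + j) * y (m + i)))
      = - (\<Sum>j<n. \<Sum>i<j. a (i, j, k) * (y (m + i) * x (m + j) - y (m + j) * x (m + i)))"
    unfolding sum_negf[symmetric] by (intro sum.cong refl) (simp add: algebra_simps)
  then show "br m n a x y k = - br m n a y x k" by (simp add: br_def)
qed

lemma br_E_right: assumes "k < m" "j < n"
  shows "br m n a u (E m j) k = (\<Sum>l<n. u (m+l) * Am n a k $$ (l,j))"
proof -
  have inner: "(\<Sum>i<j'. a (i, j', k) * (u (m + i) * E m j (m + j') - u (m + j') * E m j (m + i)))
      = (if j' = j then (\<Sum>i<j. a (i,j,k) * u (m+i)) else 0) - (if j < j' then a (j,j',k) * u (m+j') else 0)" for j'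
  proof -
    have "(\<Sum>i<j'. a (i, j', k) * (u (m + i) * E m j (m + j') - u (m + j') * E m j (m + i)))
       = (\<Sum>i<j'. (if j' = j then a (i,j',k) * u (m+i) else 0)) - (\<Sum>i<j'. (if i = j then a (i,j',k) * u (m+j') else 0))"
      unfolding sum_subtractf[symmetric] by (intro sum.cong refl) (auto simp: E_def algebra_simps)
    also have "\<dots> = (if j' = j then (\<Sum>i<j. a (i,j,k) * u (m+i)) else 0) - (if j < j' then a (j,j',k) * u (m+j') else 0)"
      by (simp add: sum.delta)
    finally show ?thesis .
  qed
  have "br m n a u (E m j) k = (\<Sum>j'<n. (if j' = j then (\<Sum>i<j. a (i,j,k) * u (m+i)) else 0) - (if j < j' then a (j,j',k) * u (m+j') else 0))"
    unfolding br_def using assms(1) inner by simp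
  also have "\<dots> = (\<Sum>i<j. a (i,j,k) * u (m+i)) - (\<Sum>j'<n. (if j < j' then a (j,j',k) * u (m+j') else 0))"
    using assms(2) by (simp add: sum_subtractf sum.delta)
  also have "(\<Sum>i<j. a (i,j,k) * u (m+i)) = (\<Sum>l<n. (if l < j then a (l,j,k) * u (m+l) else 0))"
  proof -
    have "(\<Sum>l<n. (if l < j then a (l,j,k) * u (m+l) else 0)) = (\<Sum>l\<in>{..<n} \<inter> {l. l < j}. a (l,j,k) * u (m+l))"
      by (simp add: sum.inter_restrict)
    also have "{..<n} \<inter> {l. l < j} = {..<j}" using assms(2) by auto
    finally show ?thesis by simp
  qed
  also have "(\<Sum>l<n. (if l < j then a (l,j,k) * u (m+l) else 0)) - (\<Sum>j'<n. (if j < j' then a (j,j',k) * u (m+j') else 0))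
     = (\<Sum>l<n. u (m+l) * Am n a k $$ (l,j))"
    unfolding sum_subtractf[symmetric]
    by (rule sum.cong[OF refl]) (use assms(2) in \<open>auto simp: Am_entry\<close>)
  finally show ?thesis .
qed



locale PH =
  fixes m n :: nat and a :: "nat \<times> nat \<times> nat \<Rightarrow> real" and g :: "nat \<Rightarrow> nat \<Rightarrow> real"
    and J :: "(nat \<Rightarrow> real) \<Rightarrow> (nat \<Rightarrow> real) \<Rightarrow> (nat \<Rightarrow> real)"
  assumes sym: "\<forall>i<m+n. \<forall>j<m+n. g i j = g j i"
   and nd: "\<forall>u \<in> vecs (m + n). (\<forall>v \<in> vecs (m + n). bil g (m + n) u v = 0) \<longrightarrow> u = (\<lambda>_. 0)"
   and nd2: "\<forall>u \<in> part2 m n. (\<forall>v \<in> part2 m n. bil g (m + n) u v = 0) \<longrightarrow> u = (\<lambda>_. 0)"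
   and orth: "\<forall>u \<in> part2 m n. \<forall>v \<in> part1 m n. bil g (m + n) u v = 0"
   and Jp: "\<forall>z \<in> part2 m n. \<forall>x \<in> part1 m n. J z x \<in> part1 m n"
   and Jadj: "\<forall>z \<in> part2 m n. \<forall>x \<in> part1 m n. \<forall>y \<in> part1 m n.
               bil g (m + n) (J z x) y = bil g (m + n) z (br m n a x y)"
   and cliff: "\<forall>z \<in> part2 m n. \<forall>w \<in> part2 m n. \<forall>x \<in> part1 m n.
               (\<lambda>i. J z (J w x) i + J w (J z x) i) = (\<lambda>i. - 2 * bil g (m + n) z w * x i)"

lemma PH_intro: "pseudo_H_type m n a \<Longrightarrow> \<exists>g J. PH m n a g J"
  unfolding pseudo_H_type_def PH_def
  apply (elim exE conjE)
  apply (rule exI, rule exI, intro conjI)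
        apply assumption+
  done

context PH
begin

abbreviation "B u v \<equiv> bil g (m+n) u v"

lemma gs: "i < m+n \<Longrightarrow> j < m+n \<Longrightarrow> g i j = g j i"
  using sym by blast

lemma Bsym: "B u v = B v u"
  using bil_sym[OF sym] .

definition "G1 = mat n n (\<lambda>(i,j). g (m+i) (m+j))"
definition "G2 = mat m m (\<lambda>(i,j). g i j)"

lemma G1_carrier: "G1 \<in> carrier_mat n n" by (simp add: G1_def)
lemma G2_carrier: "G2 \<in> carrier_mat m m" by (simp add: G2_def)

lemma mult_vec_entry: "A \<in> carrier_mat k k \<Longrightarrow> v \<in> carrier_vec k \<Longrightarrow> i < k \<Longrightarrow>
   (A *\<^sub>v v) $ i = (\<Sum>j<k. A $$ (i,j) * v $ j)"
  by (auto simp: scalar_prod_def lessThan_atLeast0 intro!: sum.cong)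

lemma G1_ker: assumes v: "v \<in> carrier_vec n" and Gv: "G1 *\<^sub>v v = 0\<^sub>v n" shows "v = 0\<^sub>v n"
proof -
  define u where "u = (\<lambda>l. if m \<le> l \<and> l < m+n then v$(l-m) else 0)"
  have u1: "u \<in> part1 m n" by (auto simp: u_def part1_def vecs_def)
  have uv: "u (m+l) = v$l" if "l < n" for l using that by (simp add: u_def)
  have row: "(\<Sum>j<m+n. g i j * u j) = 0" if i: "i < m+n" for i
  proof -
    have e: "(\<Sum>j<m+n. g i j * u j) = (\<Sum>j<n. g i (m+j) * v$j)"
      by (simp add: sum_split_add u_def)
    show ?thesis
    proof (cases "i < m")
      case True
      have "B (F i) u = 0" using orth F_part2[OF True] u1 by blast
      then show ?thesis using bil_F_left[of i m n g u] i by simp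
    next
      case False
      then obtain i' where i': "i = m + i'" "i' < n" using i by (metis add_less_cancel_left le_add_diff_inverse not_less)
      have "(G1 *\<^sub>v v) $ i' = 0" using Gv i' by simp
      then have "(\<Sum>j<n. G1 $$ (i',j) * v $ j) = 0" using mult_vec_entry[OF G1_carrier v i'(2)] by simp
      then have "(\<Sum>j<n. g (m+i') (m+j) * v $ j) = 0" using i' by (simp add: G1_def)
      then show ?thesis using e i' by simp
    qed
  qed
  have "B w u = 0" for w unfolding bil_expand using row by simp
  then have "\<forall>w\<in>vecs (m+n). B u w = 0" using Bsym[of u] by simp
  moreover have "u \<in> vecs (m+n)" using u1 by (simp add: part1_def)
  ultimately have "u = (\<lambda>_. 0)" using nd by blast
  then have "u l = 0" for l by simp
  then show ?thesis using v uv by (intro eq_vecI) auto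
qed

lemma det_G1: "det G1 \<noteq> 0"
  using det_0_iff_vec_prod_zero[OF G1_carrier] G1_ker by blast

lemma G2_ker: assumes v: "v \<in> carrier_vec m" and Gv: "\<forall>l<m. (\<Sum>k<m. v$k * g k l) = 0" shows "v = 0\<^sub>v m"
proof -
  define z where "z = (\<lambda>l. if l < m then v$l else 0)"
  have z2: "z \<in> part2 m n" by (auto simp: z_def part2_def vecs_def)
  have "B z w = 0" if w: "w \<in> part2 m n" for w
  proof -
    have "B z w = B w z" by (rule Bsym)
    also have "\<dots> = (\<Sum>i<m. w i * (\<Sum>j<m+n. g i j * z j))"
      unfolding bil_expand using sum_part2[OF w] by simp
    also have "\<dots> = (\<Sum>i<m. w i * (\<Sum>k<m. v$k * g k i))"
    proof (rule sum.cong[OF refl])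
      fix i assume "i \<in> {..<m}"
      then have "(\<Sum>j<m+n. g i j * z j) = (\<Sum>k<m. v$k * g k i)"
        by (auto simp: sum_split_add z_def mult.commute gs[of i] intro!: sum.cong)
      then show "w i * (\<Sum>j<m+n. g i j * z j) = w i * (\<Sum>k<m. v$k * g k i)" by simp
    qed
    also have "\<dots> = 0" using Gv by simp
    finally show ?thesis .
  qed
  then have z0: "z = (\<lambda>_. 0)" using nd2 z2 by blast
  have "v$i = 0" if "i < m" for i using fun_cong[OF z0, of i] that by (simp add: z_def)
  then show ?thesis using v by (intro eq_vecI) auto
qed

lemma det_G2: "det G2 \<noteq> 0"
proof
  assume "det G2 = 0"
  then obtain v where v: "v \<in> carrier_vec m" "v \<noteq> 0\<^sub>v m" "G2 *\<^sub>v v = 0\<^sub>v m"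
    using det_0_iff_vec_prod_zero[OF G2_carrier] by blast
  have "\<forall>l<m. (\<Sum>k<m. v$k * g k l) = 0"
  proof (intro allI impI)
    fix l assume l: "l < m"
    have "(G2 *\<^sub>v v) $ l = 0" using v l by simp
    then have "(\<Sum>k<m. G2 $$ (l,k) * v $ k) = 0" using mult_vec_entry[OF G2_carrier v(1) l] by simp
    then show "(\<Sum>k<m. v$k * g k l) = 0" using l by (simp add: G2_def mult.commute gs[of l])
  qed
  then show False using G2_ker v by blast
qed

lemma Jsq: assumes "z \<in> part2 m n" "x \<in> part1 m n" shows "J z (J z x) = (\<lambda>i. - B z z * x i)"
proof (rule ext)
  fix i
  have eq: "(\<lambda>i. J z (J z x) i + J z (J z x) i) = (\<lambda>i. - 2 * B z z * x i)"
    using cliff[rule_format, OF assms(1) assms(1) assms(2)] .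
  have "J z (J z x) i + J z (J z x) i = - 2 * B z z * x i"
    using fun_cong[OF eq, of i] by (simp only:)
  then show "J z (J z x) i = - B z z * x i" by linarith
qed

lemma Jskew: assumes "z \<in> part2 m n" "x \<in> part1 m n" "y \<in> part1 m n" shows "B (J z x) y = - B (J z y) x"
proof -
  have "B (J z x) y = B z (br m n a x y)" using Jadj[rule_format, OF assms] .
  also have "\<dots> = - B z (br m n a y x)" by (subst br_antisym) (rule bil_neg_right)
  also have "B z (br m n a y x) = B (J z y) x" using Jadj[rule_format, OF assms(1) assms(3) assms(2)] by simp
  finally show ?thesis .
qed

lemma B_part2_vecs: assumes "z \<in> part2 m n" "v \<in> vecs m"
  shows "B z v = (\<Sum>j<m. (\<Sum>i<m. z i * g i j) * v j)"
proof -
  have "B z v = (\<Sum>i<m. z i * (\<Sum>j<m+n. g i j * v j))"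
    unfolding bil_expand using sum_part2[OF assms(1)] by simp
  also have "\<dots> = (\<Sum>i<m. z i * (\<Sum>j<m. g i j * v j))"
    using assms(2) by (simp add: sum_split_add vecs_def)
  also have "\<dots> = (\<Sum>j<m. (\<Sum>i<m. z i * g i j) * v j)"
    by (simp add: sum_distrib_left sum_distrib_right mult.assoc) (rule sum.swap)
  finally show ?thesis .
qed

lemma solve2: assumes k: "k < m" shows "\<exists>z\<in>part2 m n. \<forall>x y. B z (br m n a x y) = br m n a x y k"
proof -
  define d where "d = det G2"
  define w where "w = (1/d) \<cdot>\<^sub>v (adj_mat G2 *\<^sub>v unit_vec m k)"
  have w: "w \<in> carrier_vec m" using adj_mat(1)[OF G2_carrier] by (simp add: w_def)
  have Gw: "G2 *\<^sub>v w = unit_vec m k"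
  proof -
    have "G2 *\<^sub>v w = (1/d) \<cdot>\<^sub>v ((G2 * adj_mat G2) *\<^sub>v unit_vec m k)"
      unfolding w_def using adj_mat(1)[OF G2_carrier] G2_carrier
      by (simp add: mult_mat_vec)
    also have "(G2 * adj_mat G2) *\<^sub>v unit_vec m k = d \<cdot>\<^sub>v unit_vec m k"
    proof -
      have "d \<cdot>\<^sub>v (1\<^sub>m m *\<^sub>v unit_vec m k) = (d \<cdot>\<^sub>m 1\<^sub>m m) *\<^sub>v unit_vec m k" by auto
      then show ?thesis unfolding adj_mat(2)[OF G2_carrier] d_def by simp
    qed
    also have "(1/d) \<cdot>\<^sub>v (d \<cdot>\<^sub>v unit_vec m k) = unit_vec m k"
      using det_G2 unfolding d_def by (intro eq_vecI) auto
    finally show ?thesis .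
  qed
  define z where "z = (\<lambda>l. if l < m then w$l else 0)"
  have z2: "z \<in> part2 m n" by (auto simp: z_def part2_def vecs_def)
  have coef: "(\<Sum>i<m. z i * g i j) = (if j = k then 1 else 0)" if j: "j < m" for j
  proof -
    have "(\<Sum>i<m. z i * g i j) = (\<Sum>i<m. G2 $$ (j,i) * w $ i)"
      using j by (auto simp: z_def G2_def mult.commute gs[of _ j] intro!: sum.cong)
    also have "\<dots> = (G2 *\<^sub>v w) $ j" using mult_vec_entry[OF G2_carrier w j] by simp
    also have "\<dots> = (if j = k then 1 else 0)" using Gw j k by simp
    finally show ?thesis .
  qed
  have "B z (br m n a x y) = br m n a x y k" for x y
    using B_part2_vecs[OF z2 br_vecs] coef k by (simp add: sum_delta_mult)
  then show ?thesis using z2 by blast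
qed

end


lemma smult_one_left: "W \<in> carrier_mat n k \<Longrightarrow> (d \<cdot>\<^sub>m 1\<^sub>m n) * W = d \<cdot>\<^sub>m (W :: real mat)"
  by (subst mult_smult_assoc_mat[OF one_carrier_mat]) auto
lemma smult_one_right: "W \<in> carrier_mat k n \<Longrightarrow> W * (d \<cdot>\<^sub>m 1\<^sub>m n) = d \<cdot>\<^sub>m (W :: real mat)"
  by (subst mult_smult_distrib[OF _ one_carrier_mat]) auto

lemma smult_cancel: fixes Y Z :: "real mat"
  assumes "d \<noteq> 0" "Y \<in> carrier_mat n k" "Z \<in> carrier_mat n k" "d \<cdot>\<^sub>m Y = d \<cdot>\<^sub>m Z" shows "Y = Z"
proof (rule eq_matI)
  fix i j assume "i < dim_row Z" "j < dim_col Z"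
  then have ij: "i < n" "j < k" using assms by auto
  have "(d \<cdot>\<^sub>m Y) $$ (i,j) = (d \<cdot>\<^sub>m Z) $$ (i,j)" using assms(4) by simp
  then show "Y $$ (i,j) = Z $$ (i,j)" using ij assms(1-3) by simp
qed (use assms in auto)

lemma smult_smult_mat': "a \<cdot>\<^sub>m (b \<cdot>\<^sub>m A) = (a * b) \<cdot>\<^sub>m (A :: real mat)"
  by (rule eq_matI) auto

lemma cancel_left: fixes X Y Z :: "real mat"
  assumes X: "X \<in> carrier_mat n n" "det X \<noteq> 0" and Y: "Y \<in> carrier_mat n n" "Z \<in> carrier_mat n n"
    and e: "X * Y = X * Z" shows "Y = Z"
proof -
  have aX: "adj_mat X \<in> carrier_mat n n" using adj_mat(1)[OF X(1)] .
  have "adj_mat X * (X * W) = det X \<cdot>\<^sub>m W" if W: "W \<in> carrier_mat n n" for W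
  proof -
    have "adj_mat X * (X * W) = (adj_mat X * X) * W" using aX X(1) W by simp
    also have "\<dots> = det X \<cdot>\<^sub>m W" unfolding adj_mat(3)[OF X(1)] using W by (simp add: smult_one_left)
    finally show ?thesis .
  qed
  from this[OF Y(1)] this[OF Y(2)] e have "det X \<cdot>\<^sub>m Y = det X \<cdot>\<^sub>m Z" by simp
  then show ?thesis using smult_cancel[OF X(2) Y] by simp
qed

lemma cancel_right: fixes X Y Z :: "real mat"
  assumes X: "X \<in> carrier_mat n n" "det X \<noteq> 0" and Y: "Y \<in> carrier_mat n n" "Z \<in> carrier_mat n n"
    and e: "Y * X = Z * X" shows "Y = Z"
proof -
  have aX: "adj_mat X \<in> carrier_mat n n" using adj_mat(1)[OF X(1)] .
  have "(W * X) * adj_mat X = det X \<cdot>\<^sub>m W" if W: "W \<in> carrier_mat n n" for W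
  proof -
    have "(W * X) * adj_mat X = W * (X * adj_mat X)" using aX X(1) W by simp
    also have "\<dots> = det X \<cdot>\<^sub>m W" unfolding adj_mat(2)[OF X(1)] using W by (simp add: smult_one_right)
    finally show ?thesis .
  qed
  from this[OF Y(1)] this[OF Y(2)] e have "det X \<cdot>\<^sub>m Y = det X \<cdot>\<^sub>m Z" by simp
  then show ?thesis using smult_cancel[OF X(2) Y] by simp
qed

lemma MC:
  fixes A1 A2 G T1 T2 :: "real mat"
  assumes c: "A1 \<in> carrier_mat n n" "A2 \<in> carrier_mat n n" "G \<in> carrier_mat n n"
     "T1 \<in> carrier_mat n n" "T2 \<in> carrier_mat n n"
   and n: "n > 0"
   and r1: "T1 * G = A1" and r2: "T1 * A1 = (-\<alpha>) \<cdot>\<^sub>m G" and r3: "T2 * A2 = (-\<gamma>) \<cdot>\<^sub>m G"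
   and r4: "T1 * A2 + T2 * A1 = (-2*\<beta>) \<cdot>\<^sub>m G"
   and dA: "det A1 \<noteq> 0" and dG: "det G \<noteq> 0"
  shows "\<alpha> \<noteq> 0 \<and> \<alpha> \<cdot>\<^sub>m (A2 * adj_mat A1 * A2) + (\<gamma> * det A1) \<cdot>\<^sub>m A1 = (2 * \<beta> * det A1) \<cdot>\<^sub>m A2"
proof -
  define d where "d = det A1"
  define Ad where "Ad = adj_mat A1"
  have cAd: "Ad \<in> carrier_mat n n" unfolding Ad_def using adj_mat(1)[OF c(1)] .
  have AAd: "A1 * Ad = d \<cdot>\<^sub>m 1\<^sub>m n" unfolding Ad_def d_def using adj_mat(2)[OF c(1)] .
  have alpha: "\<alpha> \<noteq> 0"
  proof
    assume a0: "\<alpha> = 0"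
    have "T1 * A1 = 0\<^sub>m n n * A1" using r2 a0 c by auto
    then have "T1 = 0\<^sub>m n n" using cancel_right[OF c(1) dA c(4)] by auto
    then have "A1 = 0\<^sub>m n n" using r1 c by auto
    then show False using dA n by simp
  qed
  have dT1: "det T1 \<noteq> 0"
  proof -
    have "det T1 * det A1 = (-\<alpha>)^n * det G"
      using det_mult[OF c(4) c(1)] r2 c(3) by simp
    then show ?thesis using alpha dG by auto
  qed
  have GAd: "\<alpha> \<cdot>\<^sub>m (G * Ad) = (- d) \<cdot>\<^sub>m T1"
  proof -
    have "(T1 * A1) * Ad = T1 * (A1 * Ad)" using c cAd by simp
    also have "\<dots> = d \<cdot>\<^sub>m T1" unfolding AAd using c by (simp add: smult_one_right)
    finally have "((-\<alpha>) \<cdot>\<^sub>m G) * Ad = d \<cdot>\<^sub>m T1" unfolding r2 .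
    then have h: "(-\<alpha>) \<cdot>\<^sub>m (G * Ad) = d \<cdot>\<^sub>m T1" using c cAd by (simp add: mult_smult_assoc_mat)
    show ?thesis
    proof (rule eq_matI)
      fix i j assume "i < dim_row ((- d) \<cdot>\<^sub>m T1)" "j < dim_col ((- d) \<cdot>\<^sub>m T1)"
      then have ij: "i < n" "j < n" using c by auto
      have "((-\<alpha>) \<cdot>\<^sub>m (G * Ad)) $$ (i,j) = (d \<cdot>\<^sub>m T1) $$ (i,j)" using h by simp
      then show "(\<alpha> \<cdot>\<^sub>m (G * Ad)) $$ (i,j) = ((- d) \<cdot>\<^sub>m T1) $$ (i,j)" using ij c cAd by simp
    qed (use c cAd in auto)
  qed
  have step1: "T1 * A2 * (Ad * A2) + T2 * A1 * (Ad * A2) = (-2*\<beta>) \<cdot>\<^sub>m (G * (Ad * A2))"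
  proof -
    have "(T1 * A2 + T2 * A1) * (Ad * A2) = T1 * A2 * (Ad * A2) + T2 * A1 * (Ad * A2)"
      using c cAd by (intro add_mult_distrib_mat) auto
    moreover have "((-2*\<beta>) \<cdot>\<^sub>m G) * (Ad * A2) = (-2*\<beta>) \<cdot>\<^sub>m (G * (Ad * A2))"
      by (rule mult_smult_assoc_mat[OF c(3)]) (use cAd c in auto)
    ultimately show ?thesis unfolding r4 by simp
  qed
  have step2: "T2 * A1 * (Ad * A2) = (- d * \<gamma>) \<cdot>\<^sub>m G"
  proof -
    have "T2 * A1 * (Ad * A2) = T2 * ((A1 * Ad) * A2)"
      by (simp add: assoc_mult_mat[OF c(5) c(1) mult_carrier_mat[OF cAd c(2)]] assoc_mult_mat[OF c(1) cAd c(2)])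
    also have "\<dots> = d \<cdot>\<^sub>m (T2 * A2)" unfolding AAd using c by (simp add: smult_one_left mult_smult_distrib)
    finally show ?thesis unfolding r3 by (simp add: smult_smult_mat')
  qed
  have step3: "\<alpha> \<cdot>\<^sub>m (G * (Ad * A2)) = (- d) \<cdot>\<^sub>m (T1 * A2)"
  proof -
    have "(\<alpha> \<cdot>\<^sub>m (G * Ad)) * A2 = \<alpha> \<cdot>\<^sub>m ((G * Ad) * A2)"
      by (rule mult_smult_assoc_mat[OF mult_carrier_mat[OF c(3) cAd] c(2)])
    also have "(G * Ad) * A2 = G * (Ad * A2)" by (rule assoc_mult_mat[OF c(3) cAd c(2)])
    finally have "\<alpha> \<cdot>\<^sub>m (G * (Ad * A2)) = ((- d) \<cdot>\<^sub>m T1) * A2" unfolding GAd by simp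
    also have "\<dots> = (- d) \<cdot>\<^sub>m (T1 * A2)" by (rule mult_smult_assoc_mat[OF c(4) c(2)])
    finally show ?thesis .
  qed
  define L where "L = \<alpha> \<cdot>\<^sub>m (A2 * Ad * A2) + (\<gamma> * d) \<cdot>\<^sub>m A1"
  define R where "R = (2 * \<beta> * d) \<cdot>\<^sub>m A2"
  have cL: "L \<in> carrier_mat n n" "R \<in> carrier_mat n n" unfolding L_def R_def using c cAd by auto
  have "T1 * L = T1 * R"
  proof (rule eq_matI)
    fix i j assume ij: "i < dim_row (T1 * R)" "j < dim_col (T1 * R)"
    then have i: "i < n" and j: "j < n" using c cL by auto
    let ?x = "\<lambda>M. M $$ (i,j)"
    have e1: "?x (T1 * A2 * (Ad * A2)) + ?x (T2 * A1 * (Ad * A2)) = - 2 * \<beta> * ?x (G * (Ad * A2))"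
      using arg_cong[OF step1, of ?x] i j c cAd by simp
    have e2: "?x (T2 * A1 * (Ad * A2)) = - d * \<gamma> * ?x G" using arg_cong[OF step2, of ?x] i j c by simp
    have e3: "\<alpha> * ?x (G * (Ad * A2)) = - d * ?x (T1 * A2)" using arg_cong[OF step3, of ?x] i j c cAd by simp
    have e4: "?x (T1 * A1) = - \<alpha> * ?x G" using arg_cong[OF r2, of ?x] i j c by simp
    have l: "?x (T1 * L) = \<alpha> * ?x (T1 * A2 * (Ad * A2)) + \<gamma> * d * ?x (T1 * A1)"
    proof -
      have "T1 * L = T1 * (\<alpha> \<cdot>\<^sub>m (A2 * Ad * A2)) + T1 * ((\<gamma> * d) \<cdot>\<^sub>m A1)"
        unfolding L_def using c cAd by (intro mult_add_distrib_mat) auto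
      also have "T1 * (\<alpha> \<cdot>\<^sub>m (A2 * Ad * A2)) = \<alpha> \<cdot>\<^sub>m (T1 * A2 * (Ad * A2))"
      proof -
        have "T1 * (\<alpha> \<cdot>\<^sub>m (A2 * Ad * A2)) = \<alpha> \<cdot>\<^sub>m (T1 * (A2 * Ad * A2))"
          by (rule mult_smult_distrib[OF c(4)]) (use c cAd in auto)
        also have "A2 * Ad * A2 = A2 * (Ad * A2)" by (rule assoc_mult_mat[OF c(2) cAd c(2)])
        also have "T1 * (A2 * (Ad * A2)) = T1 * A2 * (Ad * A2)"
          by (rule assoc_mult_mat[symmetric, OF c(4) c(2) mult_carrier_mat[OF cAd c(2)]])
        finally show ?thesis using assoc_mult_mat[OF c(2) cAd c(2)] by simp
      qed
      also have "T1 * ((\<gamma> * d) \<cdot>\<^sub>m A1) = (\<gamma> * d) \<cdot>\<^sub>m (T1 * A1)"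
        by (rule mult_smult_distrib[OF c(4) c(1)])
      finally show ?thesis using i j c cAd by simp
    qed
    have r: "?x (T1 * R) = 2 * \<beta> * d * ?x (T1 * A2)"
      unfolding R_def using c i j by (simp add: mult_smult_distrib)
    show "?x (T1 * L) = ?x (T1 * R)" unfolding l r
    proof -
      have h1: "?x (T1 * A2 * (Ad * A2)) = - 2 * \<beta> * ?x (G * (Ad * A2)) + d * \<gamma> * ?x G"
        using e1 e2 by linarith
      have "\<alpha> * ?x (T1 * A2 * (Ad * A2)) = - 2 * \<beta> * (\<alpha> * ?x (G * (Ad * A2))) + \<alpha> * d * \<gamma> * ?x G"
        unfolding h1 by (simp add: algebra_simps)
      also have "\<dots> = - 2 * \<beta> * (- d * ?x (T1 * A2)) + \<alpha> * d * \<gamma> * ?x G"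
        unfolding e3 ..
      finally have h2: "\<alpha> * ?x (T1 * A2 * (Ad * A2)) = 2 * \<beta> * d * ?x (T1 * A2) + \<alpha> * d * \<gamma> * ?x G"
        by simp
      show "\<alpha> * ?x (T1 * A2 * (Ad * A2)) + \<gamma> * d * ?x (T1 * A1) = 2 * \<beta> * d * ?x (T1 * A2)"
        unfolding h2 e4 by (simp add: algebra_simps)
    qed
  next
    show "dim_row (T1 * L) = dim_row (T1 * R)" "dim_col (T1 * L) = dim_col (T1 * R)" using c cL by auto
  qed
  then have "L = R" using cancel_left[OF c(4) dT1 cL] by simp
  then show ?thesis using alpha unfolding L_def R_def d_def Ad_def by simp
qed



context PH
begin

definition "Tm f = mat n n (\<lambda>(i,l). f (E m i) (m+l))"

lemma Tm_carrier: "Tm f \<in> carrier_mat n n" by (simp add: Tm_def)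

lemma sumE: "i < n \<Longrightarrow> (\<Sum>l<n. E m i (m+l) * X l) = X i"
  by (simp add: E_at sum_delta_mult)

lemma B_E: "u \<in> part1 m n \<Longrightarrow> j < n \<Longrightarrow> B u (E m j) = (\<Sum>l<n. u (m+l) * G1 $$ (l,j))"
  by (simp add: bil_E_right G1_def)

lemma G1_entry: "i < n \<Longrightarrow> j < n \<Longrightarrow> B (E m i) (E m j) = G1 $$ (i,j)"
  using B_E[OF E_part1] sumE by simp

lemma Tm_mult: "M \<in> carrier_mat n n \<Longrightarrow> i < n \<Longrightarrow> j < n \<Longrightarrow>
   (Tm f * M) $$ (i,j) = (\<Sum>l<n. f (E m i) (m+l) * M $$ (l,j))"
  by (auto simp: Tm_def scalar_prod_def lessThan_atLeast0 intro!: sum.cong)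

lemma JE: "z \<in> part2 m n \<Longrightarrow> i < n \<Longrightarrow> J z (E m i) \<in> part1 m n"
  using Jp E_part1 by blast

lemma Jadj': "z \<in> part2 m n \<Longrightarrow> x \<in> part1 m n \<Longrightarrow> y \<in> part1 m n \<Longrightarrow> B (J z x) y = B z (br m n a x y)"
  using Jadj by blast

lemma caseC: assumes m: "1 < m" and n: "0 < n" and dA: "det (Am n a 0) \<noteq> 0"
  shows "\<exists>\<alpha> \<beta> \<gamma>. \<alpha> \<noteq> 0 \<and> \<alpha> \<cdot>\<^sub>m (Am n a 1 * adj_mat (Am n a 0) * Am n a 1) + (\<gamma> * det (Am n a 0)) \<cdot>\<^sub>m Am n a 0
      = (2 * \<beta> * det (Am n a 0)) \<cdot>\<^sub>m Am n a 1"
proof -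
  obtain z1 where z1: "z1 \<in> part2 m n" "\<And>x y. B z1 (br m n a x y) = br m n a x y 0"
    using solve2[of 0] m by auto
  obtain z2 where z2: "z2 \<in> part2 m n" "\<And>x y. B z2 (br m n a x y) = br m n a x y 1"
    using solve2[of 1] m by auto
  define A1 where "A1 = Am n a 0"
  define A2 where "A2 = Am n a 1"
  define T1 where "T1 = Tm (J z1)"
  define T2 where "T2 = Tm (J z2)"
  have c: "A1 \<in> carrier_mat n n" "A2 \<in> carrier_mat n n" "G1 \<in> carrier_mat n n"
     "T1 \<in> carrier_mat n n" "T2 \<in> carrier_mat n n"
    by (auto simp: A1_def A2_def T1_def T2_def Am_carrier Tm_carrier G1_carrier)
  have brA1: "br m n a u (E m j) 0 = (\<Sum>l<n. u (m+l) * A1 $$ (l,j))" if "j < n" for u j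
    using br_E_right[of 0 m j n a u] m that by (simp add: A1_def)
  have brA2: "br m n a u (E m j) 1 = (\<Sum>l<n. u (m+l) * A2 $$ (l,j))" if "j < n" for u j
    using br_E_right[of 1 m j n a u] m that by (simp add: A2_def)
  have r1: "T1 * G1 = A1"
  proof (rule eq_matI)
    fix i j assume "i < dim_row A1" "j < dim_col A1"
    then have ij: "i < n" "j < n" using c by auto
    have "(T1 * G1) $$ (i,j) = B (J z1 (E m i)) (E m j)"
      unfolding T1_def using Tm_mult[OF G1_carrier ij] B_E[OF JE[OF z1(1) ij(1)] ij(2)] by simp
    also have "\<dots> = br m n a (E m i) (E m j) 0" using Jadj'[OF z1(1) E_part1 E_part1] ij z1(2) by simp
    also have "\<dots> = A1 $$ (i,j)" using brA1[OF ij(2)] sumE[OF ij(1)] by simp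
    finally show "(T1 * G1) $$ (i,j) = A1 $$ (i,j)" .
  qed (use c in auto)
  have r2: "T1 * A1 = (- B z1 z1) \<cdot>\<^sub>m G1"
  proof (rule eq_matI)
    fix i j assume "i < dim_row ((- B z1 z1) \<cdot>\<^sub>m G1)" "j < dim_col ((- B z1 z1) \<cdot>\<^sub>m G1)"
    then have ij: "i < n" "j < n" using c by auto
    have "(T1 * A1) $$ (i,j) = br m n a (J z1 (E m i)) (E m j) 0"
      unfolding T1_def using Tm_mult[OF c(1) ij] brA1[OF ij(2)] by simp
    also have "\<dots> = B (J z1 (J z1 (E m i))) (E m j)"
      using Jadj'[OF z1(1) JE[OF z1(1) ij(1)] E_part1[OF ij(2)]] z1(2) by simp
    also have "\<dots> = - B z1 z1 * G1 $$ (i,j)"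
      unfolding Jsq[OF z1(1) E_part1[OF ij(1)]] bil_smult_left G1_entry[OF ij] ..
    finally show "(T1 * A1) $$ (i,j) = ((- B z1 z1) \<cdot>\<^sub>m G1) $$ (i,j)" using ij c by simp
  qed (use c in auto)
  have r3: "T2 * A2 = (- B z2 z2) \<cdot>\<^sub>m G1"
  proof (rule eq_matI)
    fix i j assume "i < dim_row ((- B z2 z2) \<cdot>\<^sub>m G1)" "j < dim_col ((- B z2 z2) \<cdot>\<^sub>m G1)"
    then have ij: "i < n" "j < n" using c by auto
    have "(T2 * A2) $$ (i,j) = br m n a (J z2 (E m i)) (E m j) 1"
      unfolding T2_def using Tm_mult[OF c(2) ij] brA2[OF ij(2)] by simp
    also have "\<dots> = B (J z2 (J z2 (E m i))) (E m j)"
      using Jadj'[OF z2(1) JE[OF z2(1) ij(1)] E_part1[OF ij(2)]] z2(2) by simp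
    also have "\<dots> = - B z2 z2 * G1 $$ (i,j)"
      unfolding Jsq[OF z2(1) E_part1[OF ij(1)]] bil_smult_left G1_entry[OF ij] ..
    finally show "(T2 * A2) $$ (i,j) = ((- B z2 z2) \<cdot>\<^sub>m G1) $$ (i,j)" using ij c by simp
  qed (use c in auto)
  have r4: "T1 * A2 + T2 * A1 = (-2 * B z2 z1) \<cdot>\<^sub>m G1"
  proof (rule eq_matI)
    fix i j assume "i < dim_row ((-2 * B z2 z1) \<cdot>\<^sub>m G1)" "j < dim_col ((-2 * B z2 z1) \<cdot>\<^sub>m G1)"
    then have ij: "i < n" "j < n" using c by auto
    have "(T1 * A2 + T2 * A1) $$ (i,j) = (T1 * A2) $$ (i,j) + (T2 * A1) $$ (i,j)" using ij c by simp
    also have "\<dots> = br m n a (J z1 (E m i)) (E m j) 1 + br m n a (J z2 (E m i)) (E m j) 0"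
      unfolding T1_def T2_def using Tm_mult[OF c(2) ij] Tm_mult[OF c(1) ij] brA1[OF ij(2)] brA2[OF ij(2)] by simp
    also have "\<dots> = B (J z2 (J z1 (E m i))) (E m j) + B (J z1 (J z2 (E m i))) (E m j)"
      using Jadj'[OF z2(1) JE[OF z1(1) ij(1)] E_part1[OF ij(2)]] z2(2)
        Jadj'[OF z1(1) JE[OF z2(1) ij(1)] E_part1[OF ij(2)]] z1(2) by simp
    also have "\<dots> = B (\<lambda>l. J z2 (J z1 (E m i)) l + J z1 (J z2 (E m i)) l) (E m j)"
      by (rule bil_add_left[symmetric])
    also have "(\<lambda>l. J z2 (J z1 (E m i)) l + J z1 (J z2 (E m i)) l) = (\<lambda>l. - 2 * B z2 z1 * E m i l)"
      using cliff z1(1) z2(1) E_part1[OF ij(1)] by blast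
    also have "B (\<lambda>l. - 2 * B z2 z1 * E m i l) (E m j) = -2 * B z2 z1 * G1 $$ (i,j)"
      unfolding bil_smult_left G1_entry[OF ij] by simp
    finally show "(T1 * A2 + T2 * A1) $$ (i,j) = ((-2 * B z2 z1) \<cdot>\<^sub>m G1) $$ (i,j)" using ij c by simp
  qed (use c in auto)
  have "B z1 z1 \<noteq> 0 \<and> B z1 z1 \<cdot>\<^sub>m (A2 * adj_mat A1 * A2) + (B z2 z2 * det A1) \<cdot>\<^sub>m A1 = (2 * B z2 z1 * det A1) \<cdot>\<^sub>m A2"
    by (rule MC[OF c n r1 _ _ _ _ det_G1, of "B z1 z1" "B z2 z2" "B z2 z1"])
       (use r2 r3 r4 dA in \<open>simp_all add: A1_def\<close>)
  then show ?thesis unfolding A1_def A2_def by blast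
qed


lemma part2_add: "z \<in> part2 m n \<Longrightarrow> w \<in> part2 m n \<Longrightarrow> (\<lambda>i. z i + w i) \<in> part2 m n"
  by (auto simp: part2_def vecs_def)

lemma B_zero_left: "B (\<lambda>_. 0) y = 0" by (simp add: bil_def)
lemma B_zero_right: "B y (\<lambda>_. 0) = 0" by (simp add: bil_def)

lemma B_FF: assumes "c < m" "l < m" shows "B (F c) (F l) = g c l"
proof -
  have "B (F c) (F l) = (\<Sum>j<m+n. g c j * F l j)" by (rule bil_F_left) (use assms in simp)
  also have "\<dots> = g c l" using assms by (simp add: F_def sum_delta_mult')
  finally show ?thesis .
qed

lemma caseB: assumes n: "odd n" and m: "0 < m" shows False
proof -
  have zz: "B z z = 0" if z: "z \<in> part2 m n" for z
  proof -
    define cz where "cz k = (\<Sum>i<m. z i * g i k)" for k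
    define Bz where "Bz = mat n n (\<lambda>(l,j). \<Sum>k<m. cz k * Am n a k $$ (l,j))"
    define T where "T = Tm (J z)"
    have cB: "Bz \<in> carrier_mat n n" by (simp add: Bz_def)
    have form: "B z (br m n a u (E m j)) = (\<Sum>l<n. u (m+l) * Bz $$ (l,j))" if j: "j < n" for u j
    proof -
      have "B z (br m n a u (E m j)) = (\<Sum>k<m. cz k * br m n a u (E m j) k)"
        using B_part2_vecs[OF z br_vecs] by (simp add: cz_def)
      also have "\<dots> = (\<Sum>k<m. cz k * (\<Sum>l<n. u (m+l) * Am n a k $$ (l,j)))"
        using br_E_right[OF _ j] by simp
      also have "\<dots> = (\<Sum>l<n. u (m+l) * (\<Sum>k<m. cz k * Am n a k $$ (l,j)))"
        by (simp add: sum_distrib_left sum_distrib_right mult.left_commute) (rule sum.swap)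
      also have "\<dots> = (\<Sum>l<n. u (m+l) * Bz $$ (l,j))"
        using j by (simp add: Bz_def)
      finally show ?thesis .
    qed
    have TB: "T * Bz = (- B z z) \<cdot>\<^sub>m G1"
    proof (rule eq_matI)
      fix i j assume "i < dim_row ((- B z z) \<cdot>\<^sub>m G1)" "j < dim_col ((- B z z) \<cdot>\<^sub>m G1)"
      then have ij: "i < n" "j < n" using G1_carrier by auto
      have "(T * Bz) $$ (i,j) = B z (br m n a (J z (E m i)) (E m j))"
        unfolding T_def using Tm_mult[OF cB ij] form[OF ij(2)] by simp
      also have "\<dots> = B (J z (J z (E m i))) (E m j)"
        using Jadj'[OF z JE[OF z ij(1)] E_part1[OF ij(2)]] by simp
      also have "\<dots> = - B z z * G1 $$ (i,j)"
        unfolding Jsq[OF z E_part1[OF ij(1)]] bil_smult_left G1_entry[OF ij] ..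
      finally show "(T * Bz) $$ (i,j) = ((- B z z) \<cdot>\<^sub>m G1) $$ (i,j)" using ij G1_carrier by simp
    qed (use G1_carrier cB in \<open>auto simp: T_def Tm_def\<close>)
    have tr: "transpose_mat Bz = (-1) \<cdot>\<^sub>m Bz"
    proof (rule eq_matI)
      fix i j assume "i < dim_row ((-1) \<cdot>\<^sub>m Bz)" "j < dim_col ((-1) \<cdot>\<^sub>m Bz)"
      then have ij: "i < n" "j < n" using cB by auto
      have "Am n a k $$ (j,i) = - Am n a k $$ (i,j)" for k using ij by (auto simp: Am_entry)
      then show "transpose_mat Bz $$ (i,j) = ((-1) \<cdot>\<^sub>m Bz) $$ (i,j)"
        using ij by (simp add: Bz_def sum_negf[symmetric])
    qed (use cB in auto)
    have "det Bz = det (transpose_mat Bz)" using det_transpose[OF cB] by simp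
    also have "\<dots> = (-1)^n * det Bz" unfolding tr using cB by simp
    also have "\<dots> = - det Bz" using n by simp
    finally have dB: "det Bz = 0" by simp
    have "det T * det Bz = det (T * Bz)" using det_mult[OF Tm_carrier cB] by (simp add: T_def)
    also have "\<dots> = (- B z z)^n * det G1" unfolding TB using G1_carrier by simp
    finally have "det T * det Bz = (- B z z)^n * det G1" .
    then show ?thesis using dB det_G1 by simp
  qed
  have F0: "F 0 \<in> part2 m n" using F_part2 m by blast
  have "B (F 0) w = 0" if w: "w \<in> part2 m n" for w
  proof -
    have "0 = B (\<lambda>i. F 0 i + w i) (\<lambda>i. F 0 i + w i)" using zz[OF part2_add[OF F0 w]] by simp
    also have "\<dots> = B (F 0) (F 0) + B (F 0) w + (B w (F 0) + B w w)"
      by (simp add: bil_add_left bil_add_right)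
    also have "\<dots> = 2 * B (F 0) w" using zz[OF F0] zz[OF w] Bsym[of w "F 0"] by simp
    finally show ?thesis by simp
  qed
  then have "F 0 = (\<lambda>_. 0)" using nd2 F0 by blast
  then have "F 0 0 = (0::real)" by simp
  then show False by (simp add: F_def)
qed

lemma B_pair: assumes z: "z \<in> part2 m n" and w: "w \<in> part2 m n" and x: "x \<in> part1 m n"
  shows "B (J z x) (J w x) = B z w * B x x"
proof -
  have Jw: "J w x \<in> part1 m n" and Jz: "J z x \<in> part1 m n" using Jp z w x by auto
  have h1: "B (J z x) (J w x) = - B (J z (J w x)) x" using Jskew[OF z x Jw] .
  have h2: "B (J w x) (J z x) = - B (J w (J z x)) x" using Jskew[OF w x Jz] .
  have "B (J z (J w x)) x + B (J w (J z x)) x = B (\<lambda>i. J z (J w x) i + J w (J z x) i) x"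
    by (rule bil_add_left[symmetric])
  also have "(\<lambda>i. J z (J w x) i + J w (J z x) i) = (\<lambda>i. - 2 * B z w * x i)"
    using cliff z w x by blast
  also have "B (\<lambda>i. - 2 * B z w * x i) x = - 2 * B z w * B x x" by (rule bil_smult_left)
  finally have "B (J z (J w x)) x + B (J w (J z x)) x = - 2 * B z w * B x x" .
  moreover have "B (J w x) (J z x) = B (J z x) (J w x)" by (rule Bsym)
  ultimately show ?thesis using h1 h2 by linarith
qed

lemma caseA: assumes nm: "n \<le> m" and n: "0 < n" shows False
proof -
  obtain x where x: "x \<in> part1 m n" "B x x \<noteq> 0"
  proof (rule ccontr)
    assume "\<not> thesis"
    with that have all0: "\<forall>x\<in>part1 m n. B x x = 0" by blast
    have "G1 $$ (i,j) = 0" if ij: "i < n" "j < n" for i j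
    proof -
      have s: "(\<lambda>l. E m i l + E m j l) \<in> part1 m n" using E_part1 ij by (auto simp: part1_def vecs_def)
      have "0 = B (\<lambda>l. E m i l + E m j l) (\<lambda>l. E m i l + E m j l)" using all0 s by simp
      also have "\<dots> = B (E m i) (E m i) + B (E m i) (E m j) + (B (E m j) (E m i) + B (E m j) (E m j))"
        by (simp add: bil_add_left bil_add_right)
      also have "\<dots> = 2 * B (E m i) (E m j)" using all0 E_part1 ij Bsym[of "E m j" "E m i"] by simp
      finally show ?thesis using G1_entry[OF ij] by simp
    qed
    then have "G1 *\<^sub>v unit_vec n 0 = 0\<^sub>v n"
      by (intro eq_vecI) (auto simp: mult_vec_entry[OF G1_carrier] carrier_matD[OF G1_carrier])
    then have u0: "unit_vec n 0 = (0\<^sub>v n :: real vec)" using G1_ker by simp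
    have "(unit_vec n 0 :: real vec) $ 0 = (0\<^sub>v n :: real vec) $ 0" unfolding u0 ..
    then show False using n by simp
  qed
  define v where "v c = J (F c) x" for c
  have v1: "c < m \<Longrightarrow> v c \<in> part1 m n" for c unfolding v_def using Jp F_part2 x(1) by blast
  have brxx: "br m n a x x = (\<lambda>_. 0)"
  proof
    fix k have "br m n a x x k = - br m n a x x k" using fun_cong[OF br_antisym[of m n a x x], of k] by simp
    then show "br m n a x x k = 0" by simp
  qed
  have px: "B (v c) x = 0" if "c < m" for c
    unfolding v_def using Jadj'[OF F_part2[OF that] x(1) x(1)] brxx B_zero_right by simp
  have pv: "B (v c) (v l) = g c l * B x x" if "c < m" "l < m" for c l
    unfolding v_def using B_pair[OF F_part2[OF that(1)] F_part2[OF that(2)] x(1)] B_FF[OF that] by simp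
  define M where "M = mat (n+1) (n+1) (\<lambda>(r,c). if r < n then (if c < n then v c (m+r) else x (m+r)) else 0)"
  have cM: "M \<in> carrier_mat (n+1) (n+1)" by (simp add: M_def)
  have "det M = 0"
  proof -
    have Z: "(\<Prod>i = 0..<n+1. M $$ (i, p i)) = 0" if p: "p permutes {0..<n+1}" for p
    proof -
      have "p n < n + 1" using p permutes_in_image by fastforce
      then have "M $$ (n, p n) = 0" by (simp add: M_def)
      then show ?thesis by (intro prod_zero) auto
    qed
    show ?thesis unfolding det_def'[OF cM]
    proof (rule sum.neutral, intro ballI)
      fix p assume "p \<in> {p. p permutes {0..<n+1}}"
      then have pp: "p permutes {0..<n+1}" by simp
      show "signof p * (\<Prod>i = 0..<n+1. M $$ (i, p i)) = 0" unfolding Z[OF pp] by (rule mult_zero_right)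
    qed
  qed
  then obtain w where w: "w \<in> carrier_vec (n+1)" "w \<noteq> 0\<^sub>v (n+1)" "M *\<^sub>v w = 0\<^sub>v (n+1)"
    using det_0_iff_vec_prod_zero[OF cM] by blast
  define S where "S = (\<lambda>i. (\<Sum>c<n. w$c * v c i) + w$n * x i)"
  have S0: "S = (\<lambda>_. 0)"
  proof
    fix i
    show "S i = 0"
    proof (cases "m \<le> i \<and> i < m + n")
      case True
      define r where "r = i - m"
      have r: "i = m + r" "r < n" using True by (auto simp: r_def)
      have "(M *\<^sub>v w) $ r = 0" using w(3) r by simp
      then have "(\<Sum>c<n+1. M $$ (r,c) * w $ c) = 0" using mult_vec_entry[OF cM w(1)] r by simp
      then have "(\<Sum>c<n. M $$ (r,c) * w $ c) + M $$ (r,n) * w $ n = 0" by simp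
      moreover have "(\<Sum>c<n. M $$ (r,c) * w $ c) = (\<Sum>c<n. w$c * v c (m+r))"
        using r by (auto simp: M_def mult.commute intro!: sum.cong)
      ultimately show ?thesis using r by (simp add: S_def M_def mult.commute)
    next
      case False
      then have "v c i = 0" if "c < n" for c using v1[of c] that nm
        by (auto simp: part1_def vecs_def)
      moreover have "x i = 0" using x(1) False by (auto simp: part1_def vecs_def)
      ultimately show ?thesis by (simp add: S_def)
    qed
  qed
  have BS: "B S y = (\<Sum>c<n. w$c * B (v c) y) + w$n * B x y" for y
    unfolding S_def bil_add_left bil_sum_left bil_smult_left ..
  have wn: "w$n = 0"
  proof -
    have "B S x = w$n * B x x" unfolding BS using px nm by simp
    then show ?thesis using S0 B_zero_left x(2) by simp
  qed
  have wc: "(\<Sum>c<n. w$c * g c l) = 0" if l: "l < m" for l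
  proof -
    have "B S (v l) = (\<Sum>c<n. w$c * (g c l * B x x))" unfolding BS wn using pv l nm by simp
    also have "\<dots> = (\<Sum>c<n. w$c * g c l) * B x x" by (simp add: sum_distrib_right mult.assoc)
    finally show ?thesis using S0 B_zero_left x(2) by simp
  qed
  define w' where "w' = vec m (\<lambda>c. if c < n then w$c else 0)"
  have "\<forall>l<m. (\<Sum>k<m. w'$k * g k l) = 0"
  proof (intro allI impI)
    fix l assume l: "l < m"
    have "(\<Sum>k<m. w'$k * g k l) = (\<Sum>k<n + (m - n). w'$k * g k l)" using nm by simp
    also have "\<dots> = (\<Sum>k<n. w$k * g k l)" unfolding sum_split_add using nm by (simp add: w'_def)
    finally show "(\<Sum>k<m. w'$k * g k l) = 0" using wc[OF l] by simp
  qed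
  then have "w' = 0\<^sub>v m" using G2_ker by (simp add: w'_def)
  then have "w$c = 0" if "c < n" for c
  proof -
    have cm: "c < m" using that nm by simp
    have "w' $ c = 0" using \<open>w' = 0\<^sub>v m\<close> cm by simp
    then show ?thesis using that cm by (simp add: w'_def)
  qed
  then have "w = 0\<^sub>v (n+1)" using wn w(1) by (intro eq_vecI) (auto simp: less_Suc_eq)
  then show False using w(2) by simp
qed

end


lemma mat_mult_entry: "X \<in> carrier_mat n n \<Longrightarrow> Y \<in> carrier_mat n n \<Longrightarrow> i < n \<Longrightarrow> j < n \<Longrightarrow>
  (X * Y) $$ (i,j) = (\<Sum>l<n. X $$ (i,l) * Y $$ (l,j))"
  by (auto simp: scalar_prod_def lessThan_atLeast0 intro!: sum.cong)

lemma sum_single: "finite A \<Longrightarrow> p \<in> A \<Longrightarrow> (\<Sum>l\<in>A. (if l = p then c else 0) * f l) = c * (f p :: real)"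
proof -
  assume "finite A" "p \<in> A"
  have "(\<Sum>l\<in>A. (if l = p then c else 0) * f l) = (\<Sum>l\<in>A. if l = p then c * f l else 0)"
    by (rule sum.cong) auto
  then show ?thesis using \<open>finite A\<close> \<open>p \<in> A\<close> by (simp add: sum.delta')
qed

definition a0 :: "nat \<times> nat \<times> nat \<Rightarrow> real" where
  "a0 = (\<lambda>(i,j,k). if j = Suc i \<and> even i then (if k = 0 then 1 else if k = 1 then real (i div 2) else 0) else 0)"

definition pr :: "nat \<Rightarrow> nat" where "pr i = (if even i then Suc i else i - 1)"
definition sg :: "nat \<Rightarrow> real" where "sg i = (if even i then 1 else -1)"
definition lam :: "nat \<Rightarrow> real" where "lam i = real (i div 2)"

lemma pr_lt: "even n \<Longrightarrow> i < n \<Longrightarrow> pr i < n"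
  unfolding pr_def by (auto elim: oddE) (metis Suc_lessI even_Suc)
lemma pr_pr: "pr (pr i) = i" unfolding pr_def by (cases i) auto
lemma sg_pr: "sg (pr i) = - sg i" unfolding pr_def sg_def by (cases i) auto
lemma lam_pr: "lam (pr i) = lam i" unfolding pr_def lam_def by (cases i) (auto elim!: oddE)

lemma A1e: assumes "i < n" "j < n" shows "Am n a0 0 $$ (i,j) = (if j = pr i then sg i else 0)"
  using assms unfolding Am_entry[OF assms] a0_def pr_def sg_def
  by (auto elim!: oddE evenE)

lemma Am_dims[simp]: "dim_row (Am n a k) = n" "dim_col (Am n a k) = n" by (simp_all add: Am_def)

lemma A2e: assumes "i < n" "j < n" shows "Am n a0 (Suc 0) $$ (i,j) = lam i * (if j = pr i then sg i else 0)"
  using assms unfolding Am_entry[OF assms] a0_def pr_def sg_def lam_def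
  by (auto elim!: oddE evenE; presburger)

lemma A1sq: assumes n: "even n" shows "Am n a0 0 * Am n a0 0 = (-1) \<cdot>\<^sub>m 1\<^sub>m n"
proof (rule eq_matI)
  fix i j assume "i < dim_row ((-1) \<cdot>\<^sub>m 1\<^sub>m n :: real mat)" "j < dim_col ((-1) \<cdot>\<^sub>m 1\<^sub>m n :: real mat)"
  then have ij: "i < n" "j < n" by auto
  have "(Am n a0 0 * Am n a0 0) $$ (i,j) = (\<Sum>l<n. (if l = pr i then sg i else 0) * Am n a0 0 $$ (l,j))"
    unfolding mat_mult_entry[OF Am_carrier Am_carrier ij] using ij by (intro sum.cong) (auto simp: A1e)
  also have "\<dots> = sg i * Am n a0 0 $$ (pr i, j)" by (rule sum_single) (use pr_lt[OF n ij(1)] in auto)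
  also have "\<dots> = (if j = i then -1 else 0)"
    using ij pr_lt[OF n ij(1)] by (simp add: A1e pr_pr sg_pr) (simp add: sg_def)
  finally show "(Am n a0 0 * Am n a0 0) $$ (i,j) = ((-1) \<cdot>\<^sub>m 1\<^sub>m n) $$ (i,j)" using ij by simp
qed (auto simp: Am_carrier)

lemma det_A1: assumes n: "even n" shows "det (Am n a0 0) * det (Am n a0 0) = 1"
proof -
  have "det (Am n a0 0) * det (Am n a0 0) = det (Am n a0 0 * Am n a0 0)"
    by (rule det_mult[OF Am_carrier Am_carrier, symmetric])
  also have "\<dots> = 1" unfolding A1sq[OF n] using n by simp
  finally show ?thesis .
qed

lemma adj_A1: assumes n: "even n" shows "adj_mat (Am n a0 0) = (- det (Am n a0 0)) \<cdot>\<^sub>m Am n a0 0"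
proof -
  let ?A = "Am n a0 0" let ?d = "det (Am n a0 0)"
  have cA: "?A \<in> carrier_mat n n" by (rule Am_carrier)
  have cD: "adj_mat ?A \<in> carrier_mat n n" by (rule adj_mat(1)[OF cA])
  have "adj_mat ?A * (?A * ?A) = (adj_mat ?A * ?A) * ?A" using cA cD by simp
  also have "\<dots> = ?d \<cdot>\<^sub>m ?A" unfolding adj_mat(3)[OF cA] using cA by (simp add: smult_one_left)
  finally have h1: "adj_mat ?A * (?A * ?A) = ?d \<cdot>\<^sub>m ?A" .
  have "adj_mat ?A * (?A * ?A) = (-1) \<cdot>\<^sub>m adj_mat ?A" unfolding A1sq[OF n] using cD by (simp add: smult_one_right)
  with h1 have h: "(-1) \<cdot>\<^sub>m adj_mat ?A = ?d \<cdot>\<^sub>m ?A" by simp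
  show ?thesis
  proof (rule eq_matI)
    fix i j assume "i < dim_row ((- ?d) \<cdot>\<^sub>m ?A)" "j < dim_col ((- ?d) \<cdot>\<^sub>m ?A)"
    then have ij: "i < n" "j < n" using cA by auto
    have "((-1) \<cdot>\<^sub>m adj_mat ?A) $$ (i,j) = (?d \<cdot>\<^sub>m ?A) $$ (i,j)" using h by simp
    then show "adj_mat ?A $$ (i,j) = ((- ?d) \<cdot>\<^sub>m ?A) $$ (i,j)" using ij cA cD by simp
  qed (use cA cD in auto)
qed

lemma A2A1: assumes n: "even n" and ij: "i < n" "r < n"
  shows "(Am n a0 (Suc 0) * Am n a0 0) $$ (i,r) = (if r = i then - lam i else 0)"
proof -
  have "(Am n a0 1 * Am n a0 0) $$ (i,r) = (\<Sum>l<n. (if l = pr i then lam i * sg i else 0) * Am n a0 0 $$ (l,r))"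
    unfolding mat_mult_entry[OF Am_carrier Am_carrier ij] using ij by (intro sum.cong) (auto simp: A2e)
  also have "\<dots> = lam i * sg i * Am n a0 0 $$ (pr i, r)" by (rule sum_single) (use pr_lt[OF n ij(1)] in auto)
  also have "\<dots> = (if r = i then - lam i else 0)"
    using ij pr_lt[OF n ij(1)] by (simp add: A1e pr_pr sg_pr) (simp add: sg_def)
  finally show ?thesis by simp
qed

definition Cm :: "nat \<Rightarrow> (nat \<times> nat \<times> nat \<Rightarrow> real) \<Rightarrow> real mat" where
  "Cm n a = Am n a 1 * adj_mat (Am n a 0) * Am n a 1"

lemma Cm_carrier: "Cm n a \<in> carrier_mat n n"
  unfolding Cm_def using adj_mat(1)[OF Am_carrier] Am_carrier by (metis mult_carrier_mat)

lemma Cm_a0: assumes n: "even n" and ij: "i < n" "j < n"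
  shows "Cm n a0 $$ (i,j) = det (Am n a0 0) * lam i * Am n a0 1 $$ (i,j)"
proof -
  let ?d = "det (Am n a0 0)"
  have "Cm n a0 = ((- ?d) \<cdot>\<^sub>m (Am n a0 1 * Am n a0 0)) * Am n a0 1"
    unfolding Cm_def adj_A1[OF n] by (subst mult_smult_distrib[OF Am_carrier Am_carrier]) simp
  also have "\<dots> = (- ?d) \<cdot>\<^sub>m ((Am n a0 1 * Am n a0 0) * Am n a0 1)"
    by (rule mult_smult_assoc_mat[OF mult_carrier_mat[OF Am_carrier Am_carrier] Am_carrier])
  finally have e: "Cm n a0 $$ (i,j) = - ?d * ((Am n a0 1 * Am n a0 0) * Am n a0 1) $$ (i,j)"
    using ij by (simp add: Am_carrier)
  have "((Am n a0 1 * Am n a0 0) * Am n a0 1) $$ (i,j) = (\<Sum>r<n. (if r = i then - lam i else 0) * Am n a0 1 $$ (r,j))"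
    unfolding mat_mult_entry[OF mult_carrier_mat[OF Am_carrier Am_carrier] Am_carrier ij]
    using ij by (intro sum.cong refl) (simp add: A2A1[OF n] del: index_mult_mat)
  also have "\<dots> = - lam i * Am n a0 1 $$ (i,j)" by (rule sum_single) (use ij in auto)
  finally show ?thesis unfolding e by simp
qed

definition det3 :: "real \<Rightarrow> real \<Rightarrow> real \<Rightarrow> real \<Rightarrow> real \<Rightarrow> real \<Rightarrow> real \<Rightarrow> real \<Rightarrow> real \<Rightarrow> real" where
  "det3 c1 b1 a1 c2 b2 a2 c3 b3 a3 = c1 * (b2 * a3 - b3 * a2) - b1 * (c2 * a3 - c3 * a2) + a1 * (c2 * b3 - c3 * b2)"

definition D3 :: "nat \<Rightarrow> (nat \<times> nat \<times> nat \<Rightarrow> real) \<Rightarrow> real" where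
  "D3 n a = det3 (Cm n a $$ (0,1)) (Am n a 1 $$ (0,1)) (Am n a 0 $$ (0,1))
                 (Cm n a $$ (2,3)) (Am n a 1 $$ (2,3)) (Am n a 0 $$ (2,3))
                 (Cm n a $$ (4,5)) (Am n a 1 $$ (4,5)) (Am n a 0 $$ (4,5))"

definition Pc :: "nat \<Rightarrow> (nat \<times> nat \<times> nat \<Rightarrow> real) \<Rightarrow> real" where
  "Pc n a = det (Am n a 0) * D3 n a"

lemma Pc_a0: assumes n: "even n" "6 \<le> n" shows "Pc n a0 \<noteq> 0"
proof -
  let ?d = "det (Am n a0 0)"
  have d: "?d \<noteq> 0" using det_A1[OF n(1)] by auto
  have e: "Am n a0 0 $$ (2*b, Suc (2*b)) = 1" "Am n a0 1 $$ (2*b, Suc (2*b)) = real b"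
       "Cm n a0 $$ (2*b, Suc (2*b)) = ?d * real b * real b" if "b < 3" for b
  proof -
    have ij: "2*b < n" "Suc (2*b) < n" using that n by auto
    show "Am n a0 0 $$ (2*b, Suc (2*b)) = 1" using A1e[OF ij] by (simp add: pr_def sg_def)
    show "Am n a0 1 $$ (2*b, Suc (2*b)) = real b" using A2e[OF ij] by (simp add: pr_def sg_def lam_def)
    show "Cm n a0 $$ (2*b, Suc (2*b)) = ?d * real b * real b" using Cm_a0[OF n(1) ij] A2e[OF ij]
      by (simp add: pr_def sg_def lam_def)
  qed
  have "D3 n a0 = - 2 * ?d"
    using e[of 0] e[of 1] e[of 2] by (simp add: D3_def det3_def numeral_eq_Suc)
  then show ?thesis using d by (simp add: Pc_def)
qed

lemma pf_Am: assumes k: "k < m" and ij: "i < n" "j < n"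
  shows "poly_fun (coords m n) (\<lambda>a. Am n a k $$ (i,j))"
proof -
  consider "i < j" | "j < i" | "i = j" by linarith
  then show ?thesis
  proof cases
    case 1
    then have "(\<lambda>a. Am n a k $$ (i,j)) = (\<lambda>a. a (i,j,k))" using ij by (simp add: Am_entry)
    moreover have "(i,j,k) \<in> coords m n" using 1 ij k by (simp add: coords_def)
    ultimately show ?thesis by (simp add: pf_var)
  next
    case 2
    then have "(\<lambda>a. Am n a k $$ (i,j)) = (\<lambda>a. - a (j,i,k))" using ij by (simp add: Am_entry)
    moreover have "(j,i,k) \<in> coords m n" using 2 ij k by (simp add: coords_def)
    ultimately show ?thesis by (simp add: pf_var pf_neg)
  next
    case 3
    then have "(\<lambda>a. Am n a k $$ (i,j)) = (\<lambda>a. 0)" using ij by (simp add: Am_entry)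
    then show ?thesis by (simp add: pf_const)
  qed
qed

lemma pmat_Am: "k < m \<Longrightarrow> pmat (coords m n) n (\<lambda>a. Am n a k)"
  unfolding pmat_def using pf_Am Am_carrier by blast

lemma pmat_Cm: assumes m: "1 < m" shows "pmat (coords m n) n (\<lambda>a. Cm n a)"
proof -
  have a1: "pmat (coords m n) n (\<lambda>a. Am n a 1)" using pmat_Am[of 1 m n] m by simp
  have a0: "pmat (coords m n) n (\<lambda>a. Am n a 0)" using pmat_Am[of 0 m n] m by simp
  show ?thesis unfolding Cm_def using pmat_mult[OF pmat_mult[OF a1 pmat_adj[OF a0]] a1] by simp
qed

lemma pf_det3:
  assumes "poly_fun V f1" "poly_fun V f2" "poly_fun V f3" "poly_fun V f4" "poly_fun V f5"
    "poly_fun V f6" "poly_fun V f7" "poly_fun V f8" "poly_fun V f9"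
  shows "poly_fun V (\<lambda>a. det3 (f1 a) (f2 a) (f3 a) (f4 a) (f5 a) (f6 a) (f7 a) (f8 a) (f9 a))"
  unfolding det3_def by (intro pf_add pf_diff pf_mult assms)

lemma pf_Pc: assumes m: "1 < m" and n: "6 \<le> n" shows "poly_fun (coords m n) (Pc n)"
proof -
  have C: "poly_fun (coords m n) (\<lambda>a. Cm n a $$ (i,j))" if "i < n" "j < n" for i j
    using pmat_Cm[OF m] that unfolding pmat_def by blast
  have A: "poly_fun (coords m n) (\<lambda>a. Am n a k $$ (i,j))" if "k < m" "i < n" "j < n" for k i j
    using pf_Am that by blast
  have "Pc n = (\<lambda>a. det (Am n a 0) * D3 n a)" by (rule ext) (simp add: Pc_def)
  moreover have "poly_fun (coords m n) (\<lambda>a. D3 n a)"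
    unfolding D3_def using m n by (intro pf_det3 C A) auto
  moreover have "poly_fun (coords m n) (\<lambda>a. det (Am n a 0))"
    using pmat_det[OF pmat_Am[of 0 m n]] m by simp
  ultimately show ?thesis by (simp add: pf_mult)
qed

lemma det3_zero:
  assumes a: "\<alpha> \<noteq> 0" and e1: "\<alpha> * c1 + t * a1 = s * b1" and e2: "\<alpha> * c2 + t * a2 = s * b2"
    and e3: "\<alpha> * c3 + t * a3 = s * b3"
  shows "det3 c1 b1 a1 c2 b2 a2 c3 b3 a3 = 0"
proof -
  have "\<alpha> * det3 c1 b1 a1 c2 b2 a2 c3 b3 a3 = det3 (\<alpha> * c1) b1 a1 (\<alpha> * c2) b2 a2 (\<alpha> * c3) b3 a3"
    by (simp add: det3_def algebra_simps)
  also have "\<dots> = det3 (s * b1 - t * a1) b1 a1 (s * b2 - t * a2) b2 a2 (s * b3 - t * a3) b3 a3"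
  proof -
    have "\<alpha> * c1 = s * b1 - t * a1" "\<alpha> * c2 = s * b2 - t * a2" "\<alpha> * c3 = s * b3 - t * a3"
      using e1 e2 e3 by linarith+
    then show ?thesis by simp
  qed
  also have "\<dots> = 0" by (simp add: det3_def algebra_simps)
  finally show ?thesis using a by simp
qed

theorem theorem6p2:
  fixes m n :: nat
  assumes "m > 1" and "m \<le> n choose 2" and "(m, n) \<notin> {(2, 4), (3, 4)}"
  shows "generic m n (\<lambda>a. \<not> pseudo_H_type m n a)"
proof -
  have n2: "2 \<le> n"
  proof (rule ccontr)
    assume "\<not> 2 \<le> n"
    then have "n choose 2 = 0" by simp
    with assms(1,2) show False by simp
  qed
  show ?thesis
  proof (cases "odd n \<or> n \<le> m")
    case True
    have "poly_fun (coords m n) (\<lambda>_::nat\<times>nat\<times>nat\<Rightarrow>real. 1::real)" by (rule pf_const)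
    moreover have "\<exists>a::nat\<times>nat\<times>nat\<Rightarrow>real. (\<lambda>_. 1::real) a \<noteq> 0" by simp
    moreover have "\<forall>a. bracket_surj m n a \<and> (\<lambda>_. 1::real) a \<noteq> 0 \<longrightarrow> \<not> pseudo_H_type m n a"
    proof (intro allI impI notI)
      fix a assume "pseudo_H_type m n a"
      then obtain g J where "PH m n a g J" using PH_intro by blast
      then interpret PH m n a g J .
      show False using True caseA caseB assms(1) n2 by auto
    qed
    ultimately show ?thesis unfolding generic_def by blast
  next
    case False
    then have ev: "even n" and mn: "m < n" by auto
    have n6: "6 \<le> n"
    proof (rule ccontr)
      assume "\<not> 6 \<le> n"
      then have "n = 4" using ev mn assms(1) by (auto elim!: evenE)
      then have "m = 2 \<or> m = 3" using mn assms(1) by auto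
      then show False using assms(3) \<open>n = 4\<close> by auto
    qed
    have "poly_fun (coords m n) (Pc n)" using pf_Pc assms(1) n6 by blast
    moreover have "\<exists>a. Pc n a \<noteq> 0" using Pc_a0[OF ev n6] by blast
    moreover have "\<forall>a. bracket_surj m n a \<and> Pc n a \<noteq> 0 \<longrightarrow> \<not> pseudo_H_type m n a"
    proof (intro allI impI notI)
        fix a assume h: "bracket_surj m n a \<and> Pc n a \<noteq> 0" and "pseudo_H_type m n a"
        then obtain g J where "PH m n a g J" using PH_intro by blast
        then interpret PH m n a g J .
        have d: "det (Am n a 0) \<noteq> 0" and D: "D3 n a \<noteq> 0" using h by (auto simp: Pc_def)
        obtain \<alpha> \<beta> \<gamma> where ab: "\<alpha> \<noteq> 0"
          "\<alpha> \<cdot>\<^sub>m (Am n a 1 * adj_mat (Am n a 0) * Am n a 1) + (\<gamma> * det (Am n a 0)) \<cdot>\<^sub>m Am n a 0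
             = (2 * \<beta> * det (Am n a 0)) \<cdot>\<^sub>m Am n a 1"
          using caseC[OF assms(1) _ d] n6 by auto
        have ent: "\<alpha> * Cm n a $$ (p,q) + (\<gamma> * det (Am n a 0)) * Am n a 0 $$ (p,q)
                   = (2 * \<beta> * det (Am n a 0)) * Am n a 1 $$ (p,q)" if pq: "p < n" "q < n" for p q
        proof -
          have "(\<alpha> \<cdot>\<^sub>m Cm n a + (\<gamma> * det (Am n a 0)) \<cdot>\<^sub>m Am n a 0) $$ (p,q)
               = ((2 * \<beta> * det (Am n a 0)) \<cdot>\<^sub>m Am n a 1) $$ (p,q)"
            using ab(2) unfolding Cm_def by simp
          then show ?thesis using pq Cm_carrier[of n a] by simp
        qed
        have "D3 n a = 0" unfolding D3_def
          by (rule det3_zero[OF ab(1) ent ent ent]) (use n6 in auto)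
        with D show False by simp
    qed
    ultimately show ?thesis unfolding generic_def by blast
  qed
qed


end
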